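(* Let $X$ be a topological space and $T$ a locally compact Hausdorff space such that the mapping space $C(T,X)$ (with the compact-open topology) has the fixed point property. Then $X$ has the fixed point property with respect to $T$.
   Context: A space has the fixed point property if every continuous self-map of it has a fixed point. The compact-open topology on $C(T,X)$ is generated by the sets $\{g\colon T\to X\mid g(K)\subseteq U\}$ for $K\subseteq T$ compact and $U\subseteq X$ open. The space $X$ has the fixed point property with respect to $T$ if for every continuous map $f\colon T\times X\to X$ there is a continuous map $p\colon T\to X$ with $f(t,p(t))=p(t)$ for all $t\in T$. *)

theory Defs
  imports "HOL-Analysis.Analysis"
begin

text \<open>The underlying set of the mapping space C(T,X): continuous maps T -> X,
  normalised to be extensional (value undefined outside topspace T), so that
  each continuous map is represented exactly once.\<close>
definition cmaps :: "'a topology \<Rightarrow> 'b topology \<Rightarrow> ('a \<Rightarrow> 'b) set" where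
  "cmaps T X = {g. continuous_map T X g \<and> g \<in> extensional (topspace T)}"

definition compact_open_topology :: "'a topology \<Rightarrow> 'b topology \<Rightarrow> ('a \<Rightarrow> 'b) topology" where
  "compact_open_topology T X =
     topology_generated_by
       {{g \<in> cmaps T X. g ` K \<subseteq> U} | K U. compactin T K \<and> openin X U}"

definition fixed_point_property :: "'a topology \<Rightarrow> bool" where
  "fixed_point_property S \<longleftrightarrow>
     (\<forall>f. continuous_map S S f \<longrightarrow> (\<exists>x\<in>topspace S. f x = x))"

definition fixed_point_property_wrt :: "'b topology \<Rightarrow> 'a topology \<Rightarrow> bool" where
  "fixed_point_property_wrt X T \<longleftrightarrow>
     (\<forall>f. continuous_map (prod_topology T X) X f \<longrightarrow>
        (\<exists>p. continuous_map T X p \<and> (\<forall>t\<in>topspace T. f (t, p t) = p t)))"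

end

theory Submission
  imports Defs
begin

lemma co_topspace: "topspace (compact_open_topology T X) = cmaps T X"
proof -
  have "cmaps T X \<in> {{g \<in> cmaps T X. g ` K \<subseteq> U} | K U. compactin T K \<and> openin X U}"
    by (rule CollectI, rule exI[of _ "{}"], rule exI[of _ "{}"]) auto
  then show ?thesis unfolding compact_open_topology_def topology_generated_by_topspace
    by blast
qed

lemma co_sub_open:
  assumes "compactin T K" "openin X U"
  shows "openin (compact_open_topology T X) {g \<in> cmaps T X. g ` K \<subseteq> U}"
  unfolding compact_open_topology_def
  by (rule topology_generated_by_Basis) (use assms in blast)

lemma key_nbhd:
  fixes f :: "'a \<times> 'b \<Rightarrow> 'b"
  assumes lc: "locally_compact_space T" and hs: "Hausdorff_space T"
    and f: "continuous_map (prod_topology T X) X f"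
    and g: "g \<in> cmaps T X" and K: "compactin T K" and U: "openin X U"
    and gK: "\<forall>s\<in>K. f (s, g s) \<in> U"
  shows "\<exists>N. openin (compact_open_topology T X) N \<and> g \<in> N \<and>
             (\<forall>h\<in>N. h \<in> cmaps T X \<and> (\<forall>s\<in>K. f (s, h s) \<in> U))"
proof -
  have gc: "continuous_map T X g" using g by (simp add: cmaps_def)
  define W where "W = {z \<in> topspace (prod_topology T X). f z \<in> U}"
  have Wo: "openin (prod_topology T X) W"
    unfolding W_def using openin_continuous_map_preimage[OF f U] .
  have nb: "neighbourhood_base_of (compactin T) T"
    using lc hs locally_compact_space_neighbourhood_base by blast
  have Ksub: "K \<subseteq> topspace T" using K compactin_subset_topspace by blast
  have "\<forall>t\<in>K. \<exists>A C Ob. openin T A \<and> compactin T C \<and> t \<in> A \<and> A \<subseteq> C \<and> openin X Ob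
          \<and> g ` C \<subseteq> Ob \<and> (\<forall>s\<in>C. \<forall>x\<in>Ob. f (s, x) \<in> U)"
  proof
    fix t assume t: "t \<in> K"
    then have tT: "t \<in> topspace T" using Ksub by blast
    have "g t \<in> topspace X" using continuous_map_image_subset_topspace[OF gc] tT by blast
    then have "(t, g t) \<in> W" using gK t tT unfolding W_def by auto
    then obtain V Ob where V: "openin T V" and Ob: "openin X Ob" and tV: "t \<in> V" and gO: "g t \<in> Ob"
      and VO: "V \<times> Ob \<subseteq> W"
      using Wo unfolding openin_prod_topology_alt by blast
    define V' where "V' = V \<inter> {s \<in> topspace T. g s \<in> Ob}"
    have V'o: "openin T V'" unfolding V'_def
      using V openin_continuous_map_preimage[OF gc Ob] by blast
    have "t \<in> V'" unfolding V'_def using tV gO tT by blast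
    then obtain A C where "openin T A" "compactin T C" "t \<in> A" "A \<subseteq> C" "C \<subseteq> V'"
      using nb V'o unfolding neighbourhood_base_of by meson
    moreover have "g ` C \<subseteq> Ob" using \<open>C \<subseteq> V'\<close> unfolding V'_def by blast
    moreover have "\<forall>s\<in>C. \<forall>x\<in>Ob. f (s, x) \<in> U"
      using \<open>C \<subseteq> V'\<close> VO unfolding V'_def W_def by blast
    ultimately show "\<exists>A C Ob. openin T A \<and> compactin T C \<and> t \<in> A \<and> A \<subseteq> C \<and> openin X Ob
          \<and> g ` C \<subseteq> Ob \<and> (\<forall>s\<in>C. \<forall>x\<in>Ob. f (s, x) \<in> U)" using Ob by blast
  qed
  then obtain A C Ob where ACO: "\<And>t. t \<in> K \<Longrightarrow> openin T (A t) \<and> compactin T (C t) \<and> t \<in> A t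
      \<and> A t \<subseteq> C t \<and> openin X (Ob t) \<and> g ` C t \<subseteq> Ob t \<and> (\<forall>s\<in>C t. \<forall>x\<in>Ob t. f (s, x) \<in> U)"
    by metis
  have cov: "\<forall>V \<in> A ` K. openin T V" "K \<subseteq> \<Union>(A ` K)" using ACO by auto
  have "\<exists>F. finite F \<and> F \<subseteq> A ` K \<and> K \<subseteq> \<Union>F"
    using K cov unfolding compactin_def by meson
  then obtain F0 where F0: "finite F0" "F0 \<subseteq> A ` K" "K \<subseteq> \<Union>F0" by blast
  obtain F where "F \<subseteq> K" "finite F" "F0 = A ` F"
    using finite_subset_image[OF F0(1) F0(2)] by blast
  then have F: "finite F" "F \<subseteq> K" "K \<subseteq> \<Union>(A ` F)" using F0(3) by auto
  define N where "N = \<Inter>(insert (cmaps T X) ((\<lambda>t. {h \<in> cmaps T X. h ` C t \<subseteq> Ob t}) ` F))"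
  have "openin (compact_open_topology T X) N"
    unfolding N_def
  proof (rule openin_Inter)
    show "finite (insert (cmaps T X) ((\<lambda>t. {h \<in> cmaps T X. h ` C t \<subseteq> Ob t}) ` F))"
      using F by simp
  next
    fix Y assume "Y \<in> insert (cmaps T X) ((\<lambda>t. {h \<in> cmaps T X. h ` C t \<subseteq> Ob t}) ` F)"
    then show "openin (compact_open_topology T X) Y"
    proof
      assume "Y = cmaps T X" then show ?thesis
        by (metis co_topspace openin_topspace)
    next
      assume "Y \<in> (\<lambda>t. {h \<in> cmaps T X. h ` C t \<subseteq> Ob t}) ` F"
      then obtain t where "t \<in> F" "Y = {h \<in> cmaps T X. h ` C t \<subseteq> Ob t}" by blast
      then show ?thesis using co_sub_open ACO F(2) by blast
    qed
  qed auto
  moreover have "g \<in> N" unfolding N_def using g ACO F(2) by blast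
  moreover have "\<forall>h\<in>N. h \<in> cmaps T X \<and> (\<forall>s\<in>K. f (s, h s) \<in> U)"
  proof (intro ballI conjI)
    fix h assume h: "h \<in> N"
    then show "h \<in> cmaps T X" unfolding N_def by blast
    fix s assume "s \<in> K"
    then obtain t where t: "t \<in> F" "s \<in> A t" using F(3) by blast
    then have tK: "t \<in> K" using F(2) by blast
    have "s \<in> C t" using ACO[OF tK] t by blast
    moreover have "h ` C t \<subseteq> Ob t" using h t unfolding N_def by blast
    ultimately show "f (s, h s) \<in> U" using ACO[OF tK] by blast
  qed
  ultimately show ?thesis by blast
qed

theorem corollary6p2:
  fixes X :: "'b topology" and T :: "'a topology"
  assumes "locally_compact_space T"
    and "Hausdorff_space T"
    and "fixed_point_property (compact_open_topology T X)"
  shows "fixed_point_property_wrt X T"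
  unfolding fixed_point_property_wrt_def
proof (intro allI impI)
  fix f assume f: "continuous_map (prod_topology T X) X f"
  define G where "G = (\<lambda>g. restrict (\<lambda>t. f (t, g t)) (topspace T))"
  have Gc: "G g \<in> cmaps T X" if "g \<in> cmaps T X" for g
  proof -
    have gc: "continuous_map T X g" using that by (simp add: cmaps_def)
    have "continuous_map T X (\<lambda>t. f (t, g t))"
      using continuous_map_compose[OF continuous_map_pairedI[OF continuous_map_id gc] f]
      by (simp add: o_def)
    then have "continuous_map T X (G g)" unfolding G_def
      by (rule continuous_map_eq) simp
    then show ?thesis unfolding cmaps_def G_def by simp
  qed
  have "continuous_map (compact_open_topology T X) (compact_open_topology T X) G"
  proof -
    have "\<And>B. B \<in> {{g \<in> cmaps T X. g ` K \<subseteq> U} | K U. compactin T K \<and> openin X U} \<Longrightarrow>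
       openin (compact_open_topology T X) (G -` B \<inter> topspace (compact_open_topology T X))"
    proof -
      fix B assume "B \<in> {{g \<in> cmaps T X. g ` K \<subseteq> U} | K U. compactin T K \<and> openin X U}"
      then obtain K U where K: "compactin T K" and U: "openin X U"
        and B: "B = {g \<in> cmaps T X. g ` K \<subseteq> U}" by blast
      have Ksub: "K \<subseteq> topspace T" using K compactin_subset_topspace by blast
      have eq: "G -` B \<inter> topspace (compact_open_topology T X) =
            {h \<in> cmaps T X. \<forall>s\<in>K. f (s, h s) \<in> U}"
        using Gc Ksub unfolding B co_topspace G_def by auto
      show "openin (compact_open_topology T X) (G -` B \<inter> topspace (compact_open_topology T X))"
        unfolding eq
      proof (subst openin_subopen, intro ballI)
        fix g assume "g \<in> {h \<in> cmaps T X. \<forall>s\<in>K. f (s, h s) \<in> U}"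
        then obtain N where "openin (compact_open_topology T X) N" "g \<in> N"
          "\<forall>h\<in>N. h \<in> cmaps T X \<and> (\<forall>s\<in>K. f (s, h s) \<in> U)"
          using key_nbhd[OF assms(1,2) f _ K U] by blast
        then show "\<exists>N. openin (compact_open_topology T X) N \<and> g \<in> N \<and>
             N \<subseteq> {h \<in> cmaps T X. \<forall>s\<in>K. f (s, h s) \<in> U}" by blast
      qed
    qed
    moreover have "G ` topspace (compact_open_topology T X) \<subseteq>
        \<Union>{{g \<in> cmaps T X. g ` K \<subseteq> U} | K U. compactin T K \<and> openin X U}"
      using Gc co_topspace[of T X]
      unfolding compact_open_topology_def topology_generated_by_topspace by blast
    ultimately show ?thesis
      using continuous_on_generated_topo[of "{{g \<in> cmaps T X. g ` K \<subseteq> U} | K U. compactin T K \<and> openin X U}"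
          "compact_open_topology T X" G]
      unfolding compact_open_topology_def[of T X] by blast
  qed
  then obtain g where g: "g \<in> topspace (compact_open_topology T X)" "G g = g"
    using assms(3) unfolding fixed_point_property_def by blast
  then have gc: "g \<in> cmaps T X" by (simp add: co_topspace)
  show "\<exists>p. continuous_map T X p \<and> (\<forall>t\<in>topspace T. f (t, p t) = p t)"
  proof (intro exI conjI ballI)
    show "continuous_map T X g" using gc by (simp add: cmaps_def)
    fix t assume "t \<in> topspace T"
    then show "f (t, g t) = g t" using fun_cong[OF g(2), of t] by (simp add: G_def)
  qed
qed

end
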